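(* Let $\alpha=a_1a_2\cdots a_n\neq 0^n$ be a bracelet over $\{0,\dots,k-1\}$, and let $i$ be the index of the first nonzero symbol of $\alpha$. If $a_i>1$, then $\mathrm{FirstNonMin}(\alpha)=0^{i-1}(a_i-1)a_{i+1}\cdots a_n$ is a bracelet; moreover, if in addition $\alpha\in\mathbf{A}_k(n)$, then $\mathrm{FirstNonMin}(\alpha)\in\mathbf{A}_k(n)$.
   Context: Let $\Sigma=\{0,1,\dots,k-1\}$, $k\ge 2$. Strings are compared lexicographically ($\alpha<\beta$ if $\alpha$ is a proper prefix of $\beta$, or $\alpha$ has the smaller symbol at the first index where they differ). For $\alpha=a_1\cdots a_n$, $\alpha^R=a_n\cdots a_1$. $[\alpha]$ denotes the set of all rotations of $\alpha$. $\alpha$ is a necklace if it is the lexicographically smallest element of $[\alpha]$; $\alpha$ is a bracelet if it is the lexicographically smallest element of $[\alpha]\cup[\alpha^R]$. A necklace $\alpha$ is symmetric if $\alpha^R\in[\alpha]$ and asymmetric otherwise. $\mathbf{A}_k(n)$ is the set of asymmetric bracelets of length $n$ over $\Sigma$. *)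

theory Defs
  imports Main
begin

definition over_alphabet :: "nat \<Rightarrow> nat list \<Rightarrow> bool" where
  "over_alphabet k xs \<longleftrightarrow> (\<forall>a\<in>set xs. a < k)"

definition lex_less :: "nat list \<Rightarrow> nat list \<Rightarrow> bool" where
  "lex_less xs ys \<longleftrightarrow> lexordp (<) xs ys"

definition lex_le :: "nat list \<Rightarrow> nat list \<Rightarrow> bool" where
  "lex_le xs ys \<longleftrightarrow> lex_less xs ys \<or> xs = ys"

definition rotations :: "nat list \<Rightarrow> nat list set" where
  "rotations xs = {rotate m xs | m. m < length xs} \<union> {xs}"

definition is_necklace :: "nat list \<Rightarrow> bool" where
  "is_necklace xs \<longleftrightarrow> (\<forall>ys\<in>rotations xs. lex_le xs ys)"

definition is_bracelet :: "nat list \<Rightarrow> bool" where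
  "is_bracelet xs \<longleftrightarrow> (\<forall>ys\<in>rotations xs \<union> rotations (rev xs). lex_le xs ys)"

definition symmetric_necklace :: "nat list \<Rightarrow> bool" where
  "symmetric_necklace xs \<longleftrightarrow> is_necklace xs \<and> rev xs \<in> rotations xs"

definition asymmetric_necklace :: "nat list \<Rightarrow> bool" where
  "asymmetric_necklace xs \<longleftrightarrow> is_necklace xs \<and> rev xs \<notin> rotations xs"

definition asym_bracelets :: "nat \<Rightarrow> nat \<Rightarrow> nat list set" where
  "asym_bracelets k n = {xs. length xs = n \<and> over_alphabet k xs \<and> is_bracelet xs \<and> asymmetric_necklace xs}"

definition first_nonzero :: "nat list \<Rightarrow> nat" where
  "first_nonzero xs = (LEAST i. i < length xs \<and> xs ! i \<noteq> 0)"

definition FirstNonMin :: "nat list \<Rightarrow> nat list" where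
  "FirstNonMin xs = xs[first_nonzero xs := xs ! first_nonzero xs - 1]"

end

theory Submission imports Defs begin

lemma lex_less_nth:
  assumes "length xs = length ys"
  shows "lex_less xs ys \<longleftrightarrow> (\<exists>i<length xs. (\<forall>q<i. xs!q = ys!q) \<and> xs!i < ys!i)"
  unfolding lex_less_def List.lexordp_def lexord_take_index_conv
  using assms apply (auto simp: list_eq_iff_nth_eq min_def)
  apply (metis not_le)
  by (metis not_le)

lemma lex_le_nth:
  assumes "length xs = length ys"
  shows "lex_le xs ys \<longleftrightarrow> xs = ys \<or> (\<exists>i<length xs. (\<forall>q<i. xs!q = ys!q) \<and> xs!i < ys!i)"
  using lex_less_nth[OF assms] unfolding lex_le_def by blast

lemma rotate_in_rotations: "rotate m xs \<in> rotations xs"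
proof (cases "xs = []")
  case True thus ?thesis by (simp add: rotations_def)
next
  case False
  hence "rotate m xs = rotate (m mod length xs) xs" "m mod length xs < length xs"
    using rotate_conv_mod by auto
  thus ?thesis unfolding rotations_def by blast
qed

lemma rotations_cases: "ys \<in> rotations xs \<Longrightarrow> \<exists>m. ys = rotate m xs"
  unfolding rotations_def by (auto intro: exI[of _ 0])

lemma rotate_inv: "\<exists>m'. xs = rotate m' (rotate m xs)"
proof (cases "xs = []")
  case True thus ?thesis by simp
next
  case False
  define L where "L = length xs"
  have L0: "L > 0" using False L_def by simp
  have h: "m div L * L + m mod L = m" by simp
  have "L - m mod L + m = m div L * L + L"
    using h mod_less_divisor[OF L0, of m] by linarith
  hence "(L - m mod L + m) mod L = 0" by simp
  hence "rotate (L - m mod L) (rotate m xs) = xs"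
    by (simp only: rotate_rotate, subst rotate_conv_mod, simp add: L_def)
  thus ?thesis by (rule exI[of _ "L - m mod L", OF sym])
qed

lemma rotate_update:
  assumes "i < length xs"
  shows "\<exists>p<length xs. rotate m xs ! p = xs ! i \<and>
     (\<forall>q<length xs. rotate m (xs[i:=v]) ! q = (if q = p then v else rotate m xs ! q))"
proof -
  define L where "L = length xs"
  have L0: "L > 0" using assms L_def by auto
  define p where "p = (i + (L - m mod L)) mod L"
  have pL: "p < L" using L0 p_def by simp
  have mp: "(m + p) mod L = i"
  proof -
    have "(m + p) mod L = (m + (i + (L - m mod L))) mod L"
      by (simp add: p_def mod_add_right_eq)
    also have "m + (i + (L - m mod L)) = (m div L) * L + (i + L)"
      using L0 div_mult_mod_eq[of m L] mod_less_divisor[OF L0, of m] by linarith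
    finally show ?thesis using assms L_def by simp
  qed
  have inj: "q = p" if "q < L" "(m + q) mod L = i" for q
  proof -
    define r where "r = m mod L"
    have rL: "r < L" using L0 r_def by simp
    have e: "(r + x) mod L = (if r + x < L then r + x else r + x - L)" if "x < L" for x
    proof (cases "r + x < L")
      case False
      hence "(r + x) mod L = (r + x - L) mod L" by (simp add: le_mod_geq)
      also have "\<dots> = r + x - L" using False that rL by simp
      finally show ?thesis using False by simp
    qed simp
    have "(r + q) mod L = (r + p) mod L" using that mp by (simp add: r_def mod_add_left_eq)
    hence "q = p" using e[OF \<open>q < L\<close>] e[OF pL] that pL rL by (auto split: if_splits)
    thus ?thesis using that pL by simp
  qed
  have A: "rotate m xs ! p = xs ! i" using pL mp unfolding L_def by (simp add: nth_rotate)
  have B: "rotate m (xs[i:=v]) ! q = (if q = p then v else rotate m xs ! q)" if "q < L" for q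
  proof -
    have "rotate m (xs[i:=v]) ! q = xs[i:=v] ! ((m + q) mod L)"
      using that L_def by (simp add: nth_rotate)
    also have "\<dots> = (if (m + q) mod L = i then v else xs ! ((m + q) mod L))"
      using assms by (simp add: nth_list_update)
    also have "\<dots> = (if q = p then v else rotate m xs ! q)"
    proof (cases "q = p")
      case True thus ?thesis using mp by simp
    next
      case False
      hence "(m + q) mod L \<noteq> i" using inj[OF that] by blast
      moreover have "rotate m xs ! q = xs ! ((m + q) mod L)"
        using that unfolding L_def by (rule nth_rotate)
      ultimately show ?thesis using False by simp
    qed
    finally show ?thesis .
  qed
  show ?thesis using A B pL L_def by blast
qed


lemma upd_rot:
  assumes "i < length xs" "xs!i \<ge> 2"
  shows "\<exists>p<length xs. rotate m xs ! p \<ge> 2 \<and>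
     (\<forall>q<length xs. rotate m (xs[i:=xs!i - 1]) ! q = (if q = p then rotate m xs ! p - 1 else rotate m xs ! q))"
proof -
  obtain p where "p<length xs" "rotate m xs ! p = xs ! i"
     "\<forall>q<length xs. rotate m (xs[i:=xs!i - 1]) ! q = (if q = p then xs!i - 1 else rotate m xs ! q)"
    using rotate_update[OF assms(1), of m "xs!i - 1"] by blast
  thus ?thesis using assms(2) by (intro exI[of _ p]) auto
qed

lemma key:
  fixes \<alpha> \<gamma> \<gamma>' :: "nat list"
  assumes lens: "length \<gamma> = length \<alpha>" "length \<gamma>' = length \<alpha>"
  and j: "j < length \<alpha>" and z: "\<forall>q<j. \<alpha>!q = 0" and aj: "\<alpha>!j \<ge> 2"
  and p: "p < length \<alpha>" and gp: "\<gamma>!p \<ge> 2"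
  and g': "\<forall>q<length \<alpha>. \<gamma>'!q = (if q = p then \<gamma>!p - 1 else \<gamma>!q)"
  and le: "lex_le \<alpha> \<gamma>"
  shows "lex_le (\<alpha>[j := \<alpha>!j - 1]) \<gamma>' \<and> (\<alpha>[j := \<alpha>!j - 1] = \<gamma>' \<longrightarrow> \<alpha> = \<gamma>)"
proof -
  define n where "n = length \<alpha>"
  define \<beta> where "\<beta> = \<alpha>[j := \<alpha>!j - 1]"
  have bl: "length \<beta> = n" using \<beta>_def n_def by simp
  have bn: "\<beta>!q = (if q = j then \<alpha>!j - 1 else \<alpha>!q)" if "q < n" for q
    using that j unfolding \<beta>_def n_def by (simp add: nth_list_update)
  have le': "\<alpha> = \<gamma> \<or> (\<exists>i<n. (\<forall>q<i. \<alpha>!q = \<gamma>!q) \<and> \<alpha>!i < \<gamma>!i)"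
    using le lex_le_nth[of \<alpha> \<gamma>] lens n_def by simp
  have S: "(\<exists>i<n. (\<forall>q<i. \<beta>!q = \<gamma>'!q) \<and> \<beta>!i < \<gamma>'!i) \<or> (\<beta> = \<gamma>' \<and> \<alpha> = \<gamma>)"
  proof (cases "\<exists>m<j. \<gamma>!m \<noteq> 0")
    case True
    define m where "m = (LEAST m. m < j \<and> \<gamma>!m \<noteq> 0)"
    have m: "m < j \<and> \<gamma>!m \<noteq> 0" using True unfolding m_def by (metis (mono_tags, lifting) LeastI_ex)
    have mm: "\<gamma>!q = 0" if "q < m" for q
      using not_less_Least[of q "\<lambda>m. m < j \<and> \<gamma>!m \<noteq> 0"] that m unfolding m_def[symmetric] by auto
    have mn: "m < n" using m j n_def by simp
    have "\<gamma>'!m > 0" using g' mn m gp n_def by auto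
    moreover have "\<beta>!m = 0" using bn[OF mn] m z by auto
    moreover have "\<beta>!q = \<gamma>'!q" if "q < m" for q
    proof -
      have "q \<noteq> p" using mm[OF that] gp by auto
      thus ?thesis using bn[of q] g' that m z mm[OF that] mn n_def by auto
    qed
    ultimately show ?thesis using mn by (intro disjI1 exI[of _ m]) auto
  next
    case False
    hence z2: "\<gamma>!q = 0" if "q < j" for q using that by auto
    have pj: "j \<le> p" using z2[of p] gp by (cases "p < j") auto
    have gj: "\<alpha>!j \<le> \<gamma>!j"
    proof (rule ccontr)
      assume c: "\<not> \<alpha>!j \<le> \<gamma>!j"
      from le' show False
      proof
        assume "\<alpha> = \<gamma>" thus False using c by simp
      next
        assume "\<exists>i<n. (\<forall>q<i. \<alpha>!q = \<gamma>!q) \<and> \<alpha>!i < \<gamma>!i"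
        then obtain i where i: "i<n" "\<forall>q<i. \<alpha>!q = \<gamma>!q" "\<alpha>!i < \<gamma>!i" by blast
        show False
        proof (cases "i < j")
          case True
          hence "\<alpha>!i = 0" "\<gamma>!i = 0" using z z2 by auto
          thus False using i(3) by simp
        next
          case False
          show False
          proof (cases "i = j")
            case True thus False using i(3) c by simp
          next
            case False
            hence "j < i" using \<open>\<not> i < j\<close> by simp
            thus False using i(2) c by auto
          qed
        qed
      qed
    qed
    show ?thesis
    proof (cases "p \<noteq> j \<or> \<gamma>!j > \<alpha>!j")
      case True
      have "\<beta>!j < \<gamma>'!j" using True bn[of j] g' j n_def gj aj by auto
      moreover have "\<beta>!q = \<gamma>'!q" if "q < j" for q
        using bn[of q] g' that j n_def z z2 pj by auto
      ultimately show ?thesis using j n_def by (intro disjI1 exI[of _ j]) auto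
    next
      case False
      hence pj2: "p = j" and gj2: "\<gamma>!j = \<alpha>!j" using gj by auto
      from le' show ?thesis
      proof
        assume e: "\<alpha> = \<gamma>"
        have "\<beta> = \<gamma>'"
        proof (rule nth_equalityI)
          show "length \<beta> = length \<gamma>'" using bl lens n_def by simp
          fix q assume "q < length \<beta>"
          hence q: "q < n" using bl by simp
          have 1: "\<beta>!q = (if q = j then \<alpha>!j - 1 else \<alpha>!q)" using bn[OF q] .
          have 2: "\<gamma>'!q = (if q = p then \<gamma>!p - 1 else \<gamma>!q)" using g' q n_def by simp
          show "\<beta>!q = \<gamma>'!q" unfolding 1 2 using e pj2 by simp
        qed
        thus ?thesis using e by simp
      next
        assume "\<exists>i<n. (\<forall>q<i. \<alpha>!q = \<gamma>!q) \<and> \<alpha>!i < \<gamma>!i"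
        then obtain i where i: "i<n" "\<forall>q<i. \<alpha>!q = \<gamma>!q" "\<alpha>!i < \<gamma>!i" by blast
        have ij: "i \<noteq> j" using i gj2 by auto
        have "\<beta>!i = \<alpha>!i" using bn[OF i(1)] ij by simp
        moreover have "\<gamma>'!i = \<gamma>!i" using g' i(1) ij pj2 n_def by simp
        ultimately have "\<beta>!i < \<gamma>'!i" using i(3) by simp
        moreover have "\<beta>!q = \<gamma>'!q" if "q < i" for q
        proof -
          have qn: "q < n" using that i(1) by simp
          have a: "\<alpha>!q = \<gamma>!q" using i(2) that by simp
          have 1: "\<beta>!q = (if q = j then \<alpha>!j - 1 else \<alpha>!q)" using bn[OF qn] .
          have 2: "\<gamma>'!q = (if q = p then \<gamma>!p - 1 else \<gamma>!q)" using g' qn n_def by simp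
          show ?thesis unfolding 1 2 using a pj2 gj2 by simp
        qed
        ultimately show ?thesis using i by (intro disjI1 exI[of _ i]) auto
      qed
    qed
  qed
  have "lex_le \<beta> \<gamma>'" using S lex_le_nth[of \<beta> \<gamma>'] bl lens n_def by auto
  moreover have "\<beta> = \<gamma>' \<longrightarrow> \<alpha> = \<gamma>" using S by auto
  ultimately show ?thesis unfolding \<beta>_def by blast
qed


lemma rot_case:
  fixes \<alpha> :: "nat list"
  assumes j: "j < length \<alpha>" and z: "\<forall>q<j. \<alpha>!q = 0" and aj: "\<alpha>!j \<ge> 2"
    and br: "is_bracelet \<alpha>"
    and xs: "xs = \<alpha> \<or> xs = rev \<alpha>" and i: "i < length \<alpha>" and xi: "xs!i = \<alpha>!j"
    and upd: "xs[i := \<alpha>!j - 1] = ys"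
  shows "lex_le (\<alpha>[j := \<alpha>!j - 1]) (rotate m ys) \<and>
         (\<alpha>[j := \<alpha>!j - 1] = rotate m ys \<longrightarrow> \<alpha> = rotate m xs)"
proof -
  have il: "i < length xs" using i xs by auto
  obtain p where p: "p<length xs" "rotate m xs ! p \<ge> 2"
     "\<forall>q<length xs. rotate m (xs[i:=xs!i - 1]) ! q = (if q = p then rotate m xs ! p - 1 else rotate m xs ! q)"
    using upd_rot[OF il, of m] aj xi by auto
  have ln: "length xs = length \<alpha>" using xs by auto
  have "rotate m xs \<in> rotations \<alpha> \<union> rotations (rev \<alpha>)"
    using xs rotate_in_rotations by auto
  hence le: "lex_le \<alpha> (rotate m xs)" using br unfolding is_bracelet_def by blast
  show ?thesis
    by (rule key[OF _ _ j z aj _ p(2) _ le]) (use p ln upd xi in auto)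
qed

theorem mainTheorem3:
  fixes k n :: nat and \<alpha> :: "nat list"
  assumes "k \<ge> 2"
    and "length \<alpha> = n"
    and "over_alphabet k \<alpha>"
    and "\<alpha> \<noteq> replicate n 0"
    and "is_bracelet \<alpha>"
    and "\<alpha> ! first_nonzero \<alpha> > 1"
  shows "is_bracelet (FirstNonMin \<alpha>) \<and> over_alphabet k (FirstNonMin \<alpha>)
         \<and> length (FirstNonMin \<alpha>) = n
         \<and> (\<alpha> \<in> asym_bracelets k n \<longrightarrow> FirstNonMin \<alpha> \<in> asym_bracelets k n)"
proof -
  define j where "j = first_nonzero \<alpha>"
  have ex: "\<exists>i. i < length \<alpha> \<and> \<alpha>!i \<noteq> 0"
  proof (rule ccontr)
    assume "\<not> ?thesis"
    hence "\<alpha> = replicate n 0" using assms(2) by (intro nth_equalityI) auto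
    thus False using assms(4) by simp
  qed
  have jl: "j < length \<alpha>" using LeastI_ex[OF ex] unfolding j_def first_nonzero_def by blast
  have z: "\<forall>q<j. \<alpha>!q = 0"
  proof (intro allI impI)
    fix q assume "q < j"
    hence "\<not> (q < length \<alpha> \<and> \<alpha>!q \<noteq> 0)"
      using not_less_Least unfolding j_def first_nonzero_def by blast
    thus "\<alpha>!q = 0" using \<open>q < j\<close> jl by auto
  qed
  have aj: "\<alpha>!j \<ge> 2" using assms(6) j_def by simp
  define \<beta> where "\<beta> = \<alpha>[j := \<alpha>!j - 1]"
  have F: "FirstNonMin \<alpha> = \<beta>" unfolding FirstNonMin_def \<beta>_def j_def ..
  have lb: "length \<beta> = n" using assms(2) \<beta>_def by simp
  have ov: "over_alphabet k \<beta>"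
    using assms(3) jl unfolding over_alphabet_def \<beta>_def
    by (metis diff_le_self le_less_trans nth_mem order.refl set_update_subset_insert insert_iff subsetD less_imp_le_nat le_imp_less_Suc not_less_eq_eq)
  have revb: "(rev \<alpha>)[length \<alpha> - j - 1 := \<alpha>!j - 1] = rev \<beta>"
    using rev_update[OF jl] \<beta>_def by simp
  have revi: "rev \<alpha> ! (length \<alpha> - j - 1) = \<alpha>!j" using jl by (simp add: rev_nth)
  have ri: "length \<alpha> - j - 1 < length \<alpha>" using jl by simp
  have R1: "lex_le \<beta> (rotate m \<beta>) \<and> (\<beta> = rotate m \<beta> \<longrightarrow> \<alpha> = rotate m \<alpha>)" for m
    using rot_case[OF jl z aj assms(5), of \<alpha> j \<beta> m] jl \<beta>_def by simp
  have R2: "lex_le \<beta> (rotate m (rev \<beta>)) \<and> (\<beta> = rotate m (rev \<beta>) \<longrightarrow> \<alpha> = rotate m (rev \<alpha>))" for m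
    using rot_case[OF jl z aj assms(5), of "rev \<alpha>" "length \<alpha> - j - 1" "rev \<beta>" m] ri revi revb \<beta>_def by simp
  have brb: "is_bracelet \<beta>"
    unfolding is_bracelet_def
  proof
    fix ys assume "ys \<in> rotations \<beta> \<union> rotations (rev \<beta>)"
    then obtain m where "ys = rotate m \<beta> \<or> ys = rotate m (rev \<beta>)"
      using rotations_cases by blast
    thus "lex_le \<beta> ys" using R1 R2 by blast
  qed
  have asym: "FirstNonMin \<alpha> \<in> asym_bracelets k n" if A: "\<alpha> \<in> asym_bracelets k n"
  proof -
    have na: "rev \<alpha> \<notin> rotations \<alpha>" using A unfolding asym_bracelets_def asymmetric_necklace_def by simp
    have nb: "rev \<beta> \<notin> rotations \<beta>"
    proof
      assume "rev \<beta> \<in> rotations \<beta>"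
      then obtain m where "rev \<beta> = rotate m \<beta>" using rotations_cases by blast
      then obtain m' where "\<beta> = rotate m' (rev \<beta>)" using rotate_inv by metis
      hence "\<alpha> = rotate m' (rev \<alpha>)" using R2 by blast
      then obtain m'' where "rev \<alpha> = rotate m'' \<alpha>" using rotate_inv by metis
      thus False using na rotate_in_rotations by metis
    qed
    have "is_necklace \<beta>" using brb unfolding is_necklace_def is_bracelet_def by blast
    thus ?thesis using F nb brb ov lb unfolding asym_bracelets_def asymmetric_necklace_def by simp
  qed
  show ?thesis using F brb ov lb asym by simp
qed

end
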